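(* For every integer $n>0$, $\mathrm{DE2}(n)+\mathrm{DE2}(n-3)$ equals the number of partitions of $n$ into parts each of which is greater than $1$ and not divisible by $4$.
   Context: For a nonnegative integer $n$, $\mathrm{DE2}(n)$ denotes the number of partitions of $n$ in which no even part is repeated, and the largest part is odd and appears at least twice (so $\mathrm{DE2}(0)=0$); set $\mathrm{DE2}(m)=0$ for $m<0$. Equivalently, $\sum_{n\ge0}\mathrm{DE2}(n)q^n=\sum_{n\ge0}\frac{(-q^2;q^2)_n q^{4n+2}}{(q;q^2)_{n+1}}$, where $(a;q)_n=\prod_{j=0}^{n-1}(1-aq^j)$. *)

theory Defs
  imports Main "HOL-Library.Multiset"
begin

definition partitions :: "nat \<Rightarrow> nat multiset set" where
  "partitions n = {M. (\<forall>x\<in>#M. 0 < x) \<and> sum_mset M = n}"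

definition DE2 :: "int \<Rightarrow> nat" where
  "DE2 m = (if m < 0 then 0 else
     card {M \<in> partitions (nat m).
             (\<forall>x\<in>#M. even x \<longrightarrow> count M x \<le> 1) \<and>
             M \<noteq> {#} \<and> odd (Max (set_mset M)) \<and> 2 \<le> count M (Max (set_mset M))})"

end

theory Submission
  imports Defs "HOL-Computational_Algebra.Formal_Power_Series"
begin

unbundle fps_syntax



lemma mem_le_sum: "(x::nat) \<in># M \<Longrightarrow> x \<le> sum_mset M"
  by (metis le_add1 sum_mset.remove)

lemma size_le_sum: "(\<forall>x\<in>#M. 0 < (x::nat)) \<Longrightarrow> size M \<le> sum_mset M"
  by (induction M) auto

lemma finite_partitions: "finite (partitions m)"
proof -
  have "partitions m \<subseteq> mset ` {xs. set xs \<subseteq> {1..m} \<and> length xs \<le> m}"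
  proof
    fix M assume M: "M \<in> partitions m"
    obtain xs where xs: "M = mset xs" by (metis ex_mset)
    have "set xs \<subseteq> {1..m}" using M mem_le_sum unfolding partitions_def xs
      by (auto simp: Suc_le_eq)
    moreover have "length xs \<le> m" using M size_le_sum[of M] unfolding partitions_def xs by auto
    ultimately show "M \<in> mset ` {xs. set xs \<subseteq> {1..m} \<and> length xs \<le> m}" using xs by auto
  qed
  thus ?thesis by (rule finite_subset) (auto intro: finite_lists_length_le)
qed

lemma sum_mset_minus: "(j::nat) \<in># M \<Longrightarrow> sum_mset (M - {#j#}) = sum_mset M - j"
  by (metis add_diff_cancel_left' sum_mset.remove)

definition Sg :: "(nat \<Rightarrow> bool) \<Rightarrow> (nat \<Rightarrow> bool) \<Rightarrow> nat \<Rightarrow> nat \<Rightarrow> nat multiset set" where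
  "Sg A B k m = {M \<in> partitions m. (\<forall>x\<in>#M. x \<le> k \<and> A x) \<and> (\<forall>x\<in>#M. B x \<longrightarrow> count M x \<le> 1)}"

lemma finite_Sg: "finite (Sg A B k m)"
  unfolding Sg_def by (rule finite_subset[OF _ finite_partitions]) auto

lemma Sg_0: "Sg A B 0 m = (if m = 0 then {{#}} else {})"
proof -
  have "M \<in> {{#}}" if "M \<in> Sg A B 0 m" for M
  proof -
    have "set_mset M = {}" using that unfolding Sg_def partitions_def by fastforce
    then show ?thesis by simp
  qed
  then have "Sg A B 0 m \<subseteq> {{#}}" by (rule subsetI)
  moreover have "{#} \<in> Sg A B 0 m \<longleftrightarrow> m = 0" unfolding Sg_def partitions_def by auto
  ultimately show ?thesis by (metis (no_types, lifting) empty_iff insertI1 subsetI subset_singleton_iff)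
qed

lemma Sg_split: "Sg A B (Suc k) m = Sg A B k m \<union> {M \<in> Sg A B (Suc k) m. Suc k \<in># M}"
  unfolding Sg_def by (auto simp: le_Suc_eq)

lemma card_Sg_split: "card (Sg A B (Suc k) m) = card (Sg A B k m) + card {M \<in> Sg A B (Suc k) m. Suc k \<in># M}"
  apply (subst Sg_split)
  apply (rule card_Un_disjoint)
  using finite_Sg apply auto
  unfolding Sg_def by auto

lemma Sg_notA: "\<not> A (Suc k) \<Longrightarrow> {M \<in> Sg A B (Suc k) m. Suc k \<in># M} = {}"
  unfolding Sg_def by auto

lemma Sg_noB:
  assumes "A j" "\<not> B j" "j = Suc k"
  shows "{M \<in> Sg A B j m. j \<in># M} = (if j \<le> m then add_mset j ` Sg A B j (m - j) else {})"
proof (cases "j \<le> m")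
  case True
  have "{M \<in> Sg A B j m. j \<in># M} = add_mset j ` Sg A B j (m - j)"
  proof (intro equalityI subsetI)
    fix M assume M: "M \<in> {M \<in> Sg A B j m. j \<in># M}"
    then have jM: "j \<in># M" by auto
    have "M - {#j#} \<in> Sg A B j (m - j)"
      using M unfolding Sg_def partitions_def
      by (auto dest: in_diffD simp: sum_mset_minus)
    moreover have "M = add_mset j (M - {#j#})" using jM by simp
    ultimately show "M \<in> add_mset j ` Sg A B j (m - j)" by blast
  next
    fix M assume "M \<in> add_mset j ` Sg A B j (m - j)"
    then obtain M' where "M' \<in> Sg A B j (m - j)" "M = add_mset j M'" by auto
    then show "M \<in> {M \<in> Sg A B j m. j \<in># M}"
      using True assms unfolding Sg_def partitions_def by auto
  qed
  then show ?thesis using True by simp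
next
  case False
  then show ?thesis unfolding Sg_def partitions_def using mem_le_sum by fastforce
qed

lemma Sg_B:
  assumes "A j" "B j" "j = Suc k"
  shows "{M \<in> Sg A B j m. j \<in># M} = (if j \<le> m then add_mset j ` Sg A B k (m - j) else {})"
proof (cases "j \<le> m")
  case True
  have "{M \<in> Sg A B j m. j \<in># M} = add_mset j ` Sg A B k (m - j)"
  proof (intro equalityI subsetI)
    fix M assume M: "M \<in> {M \<in> Sg A B j m. j \<in># M}"
    then have jM: "j \<in># M" by auto
    have "count M j \<le> 1" using M assms unfolding Sg_def by auto
    moreover have "count M j \<ge> 1" using jM by (simp add: Suc_le_eq)
    ultimately have c: "count M j = 1" by linarith
    have nj: "j \<notin># M - {#j#}" using c by (simp add: not_in_iff)
    have "x \<le> k" if "x \<in># M - {#j#}" for x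
    proof -
      have "x \<le> Suc k" using M that assms(3) unfolding Sg_def by (auto dest: in_diffD)
      moreover have "x \<noteq> j" using nj that by auto
      ultimately show ?thesis using assms(3) by simp
    qed
    moreover have "count (M - {#j#}) x \<le> count M x" for x by simp
    ultimately have "M - {#j#} \<in> Sg A B k (m - j)"
      using M jM unfolding Sg_def partitions_def
      by (auto dest: in_diffD simp: sum_mset_minus intro: le_trans)
    moreover have "M = add_mset j (M - {#j#})" using jM by simp
    ultimately show "M \<in> add_mset j ` Sg A B k (m - j)" by blast
  next
    fix M assume "M \<in> add_mset j ` Sg A B k (m - j)"
    then obtain M' where M': "M' \<in> Sg A B k (m - j)" "M = add_mset j M'" by auto
    then have "j \<notin># M'" using assms unfolding Sg_def by auto
    then show "M \<in> {M \<in> Sg A B j m. j \<in># M}"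
      using M' True assms unfolding Sg_def partitions_def by (auto simp: not_in_iff)
  qed
  then show ?thesis using True by simp
next
  case False
  then show ?thesis unfolding Sg_def partitions_def using mem_le_sum by fastforce
qed




lemma card_Sg_Suc:
  "card (Sg A B (Suc k) m) = card (Sg A B k m) +
     (if A (Suc k) \<and> Suc k \<le> m then (if B (Suc k) then card (Sg A B k (m - Suc k))
        else card (Sg A B (Suc k) (m - Suc k))) else 0)"
proof -
  have inj: "inj_on (add_mset (Suc k)) X" for X by (auto simp: inj_on_def)
  show ?thesis
  proof (cases "A (Suc k)")
    case False then show ?thesis using card_Sg_split[of A B k m] Sg_notA[of A k B m] by simp
  next
    case True
    show ?thesis
    proof (cases "B (Suc k)")
      case b: True
      show ?thesis using card_Sg_split[of A B k m] Sg_B[where A=A and B=B and j="Suc k" and k=k and m=m, OF True b refl]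
        card_image[OF inj] True b by auto
    next
      case b: False
      show ?thesis using card_Sg_split[of A B k m] Sg_noB[where A=A and B=B and j="Suc k" and k=k and m=m, OF True b refl]
        card_image[OF inj] True b by auto
    qed
  qed
qed

definition Dset :: "nat \<Rightarrow> nat \<Rightarrow> nat multiset set" where
  "Dset k m = {M \<in> Sg (\<lambda>_. True) even k m. M \<noteq> {#} \<and> odd (Max (set_mset M)) \<and> 2 \<le> count M (Max (set_mset M))}"

lemma finite_Dset: "finite (Dset k m)"
  unfolding Dset_def using finite_Sg by auto

lemma Dset_0: "Dset 0 m = {}"
  unfolding Dset_def using Sg_0 by auto

lemma Sg_mono: "k \<le> k' \<Longrightarrow> Sg A B k m \<subseteq> Sg A B k' m"
  unfolding Sg_def by auto

lemma Dset_split: "Dset (Suc k) m = Dset k m \<union> {M \<in> Dset (Suc k) m. Suc k \<in># M}"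
proof -
  have "Dset k m \<subseteq> Dset (Suc k) m" unfolding Dset_def using Sg_mono[of k "Suc k"] by auto
  moreover have "M \<in> Dset k m" if "M \<in> Dset (Suc k) m" "Suc k \<notin># M" for M
    using that unfolding Dset_def Sg_def by (auto simp: le_Suc_eq)
  ultimately show ?thesis by blast
qed

lemma Max_is:
  assumes "j \<in># M" "\<forall>x\<in>#M. x \<le> (j::nat)"
  shows "Max (set_mset M) = j"
  using assms by (intro Max_eqI) auto

lemma Dset_top:
  assumes "j = Suc k"
  shows "{M \<in> Dset j m. j \<in># M} =
    (if odd j \<and> 2 * j \<le> m then (\<lambda>M. add_mset j (add_mset j M)) ` Sg (\<lambda>_. True) even j (m - 2 * j) else {})"
proof -
  have L: "odd j \<and> 2 * j \<le> m \<and> M \<in> (\<lambda>M. add_mset j (add_mset j M)) ` Sg (\<lambda>_. True) even j (m - 2 * j)"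
    if M: "M \<in> Dset j m" "j \<in># M" for M
  proof -
    have parts: "\<forall>x\<in>#M. x \<le> j" using M unfolding Dset_def Sg_def by auto
    have mx: "Max (set_mset M) = j" using Max_is[OF M(2) parts] .
    have oj: "odd j" and cj: "2 \<le> count M j" using M mx unfolding Dset_def by auto
    define M' where "M' = M - {#j#} - {#j#}"
    have Meq: "M = add_mset j (add_mset j M')"
    proof -
      have "count (M - {#j#}) j \<ge> 1" using cj by simp
      then have j2: "j \<in># M - {#j#}" using cj by (simp add: in_diff_count)
      have "M = add_mset j (M - {#j#})" using M(2) by simp
      also have "M - {#j#} = add_mset j M'" unfolding M'_def by (rule insert_DiffM[OF j2, symmetric])
      finally show ?thesis .
    qed
    have sumM: "sum_mset M = m" using M unfolding Dset_def Sg_def partitions_def by auto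
    then have s: "sum_mset M' = m - 2 * j" "2 * j \<le> m" using Meq by auto
    have "M' \<in> Sg (\<lambda>_. True) even j (m - 2 * j)"
    proof -
      have g: "\<forall>x\<in>#M. even x \<longrightarrow> count M x \<le> 1" and p: "\<forall>x\<in>#M. 0 < x"
        using M unfolding Dset_def Sg_def partitions_def by auto
      have "count M' x \<le> 1" if "x \<in># M'" "even x" for x
      proof -
        have "x \<noteq> j" using oj that by auto
        then have "count M' x = count M x" using Meq by simp
        then show ?thesis using g that Meq by auto
      qed
      then show ?thesis using p parts s Meq unfolding Sg_def partitions_def by auto
    qed
    then show ?thesis using oj s Meq by blast
  qed
  have R: "M \<in> Dset j m \<and> j \<in># M"
    if h: "odd j" "2 * j \<le> m" "M \<in> (\<lambda>M. add_mset j (add_mset j M)) ` Sg (\<lambda>_. True) even j (m - 2 * j)" for M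
  proof -
    obtain M' where M': "M' \<in> Sg (\<lambda>_. True) even j (m - 2 * j)" and Meq: "M = add_mset j (add_mset j M')"
      using h(3) by (rule imageE)
    have parts: "\<forall>x\<in>#M. x \<le> j" using M' Meq unfolding Sg_def by auto
    have mx: "Max (set_mset M) = j" using Max_is[OF _ parts] Meq by simp
    have "M \<in> Sg (\<lambda>_. True) even j m"
      using M' Meq h(1,2) assms unfolding Sg_def partitions_def by auto
    then show ?thesis using mx Meq h(1) unfolding Dset_def by auto
  qed
  show ?thesis
  proof (cases "odd j \<and> 2 * j \<le> m")
    case True
    then show ?thesis using L R by (intro trans[OF _ if_P[symmetric]] equalityI subsetI) blast+
  next
    case False
    then show ?thesis using L by (intro trans[OF _ if_not_P[symmetric]]) blast+
  qed
qed

lemma card_Dset_Suc: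
  "card (Dset (Suc k) m) = card (Dset k m) +
     (if odd (Suc k) \<and> 2 * Suc k \<le> m then card (Sg (\<lambda>_. True) even (Suc k) (m - 2 * Suc k)) else 0)"
proof -
  have inj: "inj_on (\<lambda>M. add_mset j (add_mset j M)) X" for j X by (auto simp: inj_on_def)
  have "card (Dset (Suc k) m) = card (Dset k m) + card {M \<in> Dset (Suc k) m. Suc k \<in># M}"
    apply (subst Dset_split)
    apply (rule card_Un_disjoint)
    using finite_Dset apply auto
    unfolding Dset_def Sg_def by auto
  then show ?thesis using Dset_top[OF refl, of k m] card_image[OF inj] by auto
qed




definition TT :: "(nat \<Rightarrow> bool) \<Rightarrow> (nat \<Rightarrow> bool) \<Rightarrow> nat \<Rightarrow> int fps" where
  "TT A B k = Abs_fps (\<lambda>m. int (card (Sg A B k m)))"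

definition DD :: "nat \<Rightarrow> int fps" where
  "DD k = Abs_fps (\<lambda>m. int (card (Dset k m)))"

lemma TT_nth[simp]: "TT A B k $ m = int (card (Sg A B k m))" by (simp add: TT_def)
lemma DD_nth[simp]: "DD k $ m = int (card (Dset k m))" by (simp add: DD_def)

lemma TT_0: "TT A B 0 = 1"
  by (rule fps_ext) (simp add: Sg_0)

lemma TT_Suc: "TT A B (Suc k) = TT A B k +
   (if A (Suc k) then fps_X^(Suc k) * (if B (Suc k) then TT A B k else TT A B (Suc k)) else 0)"
  apply (rule fps_ext)
  apply (simp only: TT_nth fps_add_nth)
  apply (subst card_Sg_Suc)
  apply (auto simp: fps_X_power_mult_nth not_less simp del: power_Suc)
  done

lemma DD_0: "DD 0 = 0"
  by (rule fps_ext) (simp add: Dset_0)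

lemma DD_Suc: "DD (Suc k) = DD k +
   (if odd (Suc k) then fps_X^(2 * Suc k) * TT (\<lambda>_. True) even (Suc k) else 0)"
  apply (rule fps_ext)
  apply (simp only: DD_nth fps_add_nth)
  apply (subst card_Dset_Suc)
  apply (auto simp: fps_X_power_mult_nth not_less simp del: power_Suc)
  done




abbreviation "T \<equiv> TT (\<lambda>_. True) even"
abbreviation "Q \<equiv> TT (\<lambda>x. 1 < x \<and> \<not> 4 dvd x) (\<lambda>_. False)"

primrec PO :: "nat \<Rightarrow> int fps" where
  "PO 0 = 1" | "PO (Suc k) = PO k * (if odd (Suc k) then 1 - fps_X^(Suc k) else 1)"
primrec PO3 :: "nat \<Rightarrow> int fps" where
  "PO3 0 = 1" | "PO3 (Suc k) = PO3 k * (if odd (Suc k) \<and> Suc k \<noteq> 1 then 1 - fps_X^(Suc k) else 1)"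
primrec EE :: "nat \<Rightarrow> int fps" where
  "EE 0 = 1" | "EE (Suc k) = EE k * (if even (Suc k) then 1 + fps_X^(Suc k) else 1)"
primrec P2 :: "nat \<Rightarrow> int fps" where
  "P2 0 = 1" | "P2 (Suc k) = P2 k * (if Suc k mod 4 = 2 then 1 - fps_X^(Suc k) else 1)"
primrec PA :: "nat \<Rightarrow> int fps" where
  "PA 0 = 1" | "PA (Suc k) = PA k * (if 1 < Suc k \<and> \<not> 4 dvd Suc k then 1 - fps_X^(Suc k) else 1)"

lemma TT_Suc_noB:
  assumes "A (Suc k)" "\<not> B (Suc k)"
  shows "TT A B (Suc k) * (1 - fps_X^(Suc k)) = TT A B k"
proof -
  have e: "TT A B (Suc k) = TT A B k + fps_X^(Suc k) * TT A B (Suc k)"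
    by (subst TT_Suc) (simp add: assms)
  have "TT A B (Suc k) * (1 - fps_X^(Suc k)) = TT A B (Suc k) - fps_X^(Suc k) * TT A B (Suc k)"
    by (simp add: algebra_simps)
  also have "\<dots> = TT A B k" using e by (metis add_diff_cancel_right')
  finally show ?thesis .
qed

lemma TT_Suc_B:
  assumes "A (Suc k)" "B (Suc k)"
  shows "TT A B (Suc k) = TT A B k * (1 + fps_X^(Suc k))"
  by (subst TT_Suc) (simp add: assms algebra_simps)

lemma TT_Suc_notA:
  assumes "\<not> A (Suc k)"
  shows "TT A B (Suc k) = TT A B k"
  by (subst TT_Suc) (simp add: assms)

lemma T_PO: "T k * PO k = EE k"
proof (induction k)
  case 0 then show ?case by (simp add: TT_0)
next
  case (Suc k)
  show ?case
  proof (cases "odd (Suc k)")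
    case True
    have t: "T (Suc k) * (1 - fps_X^(Suc k)) = T k" using TT_Suc_noB[of "\<lambda>_. True" k even] True by blast
    have p: "PO (Suc k) = PO k * (1 - fps_X^(Suc k))" using True by (simp only: PO.simps simp_thms if_True)
    have e: "EE (Suc k) = EE k" using True by (simp only: EE.simps if_False) simp
    have "T (Suc k) * PO (Suc k) = (T (Suc k) * (1 - fps_X^(Suc k))) * PO k"
      unfolding p by (simp only: mult_ac)
    also have "\<dots> = T k * PO k" by (simp only: t)
    also have "\<dots> = EE (Suc k)" by (simp only: Suc.IH e)
    finally show ?thesis .
  next
    case False
    have t: "T (Suc k) = T k * (1 + fps_X^(Suc k))"
      using TT_Suc_B[of "\<lambda>_. True" k even] False by blast
    have p: "PO (Suc k) = PO k" using False by (simp only: PO.simps if_False) simp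
    have e: "EE (Suc k) = EE k * (1 + fps_X^(Suc k))" using False by (simp only: EE.simps) simp
    have "T (Suc k) * PO (Suc k) = (T k * PO k) * (1 + fps_X^(Suc k))"
      unfolding p t by (simp only: mult_ac)
    also have "\<dots> = EE (Suc k)" by (simp only: Suc.IH e)
    finally show ?thesis .
  qed
qed

lemma Q_PA: "Q k * PA k = 1"
proof (induction k)
  case 0 then show ?case by (simp add: TT_0)
next
  case (Suc k)
  show ?case
  proof (cases "1 < Suc k \<and> \<not> 4 dvd Suc k")
    case True
    have t: "Q (Suc k) * (1 - fps_X^(Suc k)) = Q k"
      using TT_Suc_noB[of "\<lambda>x. 1 < x \<and> \<not> 4 dvd x" k "\<lambda>_. False"] True by blast
    have p: "PA (Suc k) = PA k * (1 - fps_X^(Suc k))" using True by (simp only: PA.simps simp_thms if_True)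
    have "Q (Suc k) * PA (Suc k) = (Q (Suc k) * (1 - fps_X^(Suc k))) * PA k"
      unfolding p by (simp only: mult_ac)
    also have "\<dots> = Q k * PA k" by (simp only: t)
    also have "\<dots> = 1" by (rule Suc.IH)
    finally show ?thesis .
  next
    case False
    have t: "Q (Suc k) = Q k"
      using TT_Suc_notA[of "\<lambda>x. 1 < x \<and> \<not> 4 dvd x" k "\<lambda>_. False"] False by blast
    have p: "PA (Suc k) = PA k" using False by (simp only: PA.simps if_False) simp
    show ?thesis unfolding t p by (rule Suc.IH)
  qed
qed

lemma PA_split: "PA k = PO3 k * P2 k"
proof (induction k)
  case 0 then show ?case by simp
next
  case (Suc k)
  have c: "(1 < Suc k \<and> \<not> 4 dvd Suc k) \<longleftrightarrow> (odd (Suc k) \<and> Suc k \<noteq> 1) \<or> Suc k mod 4 = 2" by presburger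
  have d: "\<not> ((odd (Suc k) \<and> Suc k \<noteq> 1) \<and> Suc k mod 4 = 2)" by presburger
  show ?case using Suc c d by (auto simp del: power_Suc)
qed

lemma PO_split: "k \<ge> 1 \<Longrightarrow> PO k = (1 - fps_X) * PO3 k"
proof (induction k)
  case 0 then show ?case by simp
next
  case (Suc k)
  show ?case
  proof (cases "k = 0")
    case True then show ?thesis by simp
  next
    case False then show ?thesis using Suc by (simp del: power_Suc)
  qed
qed




definition HH :: "nat \<Rightarrow> int fps" where
  "HH N = prod (\<lambda>i. 1 - fps_X^(4*i)) {N div 2 + 1..N}"

lemma EE2: "EE (Suc (Suc (2*N))) = EE (2*N) * (1 + fps_X^(2*N+2))"
  by simp
lemma P2_2: "P2 (Suc (Suc (2*N))) = P2 (2*N) * (if (2*N+2) mod 4 = 2 then 1 - fps_X^(2*N+2) else 1)"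
proof -
  have "Suc (2*N) mod 4 \<noteq> 2" by presburger
  then show ?thesis by simp
qed

lemma sq_diff: "(1 + (y::int fps)) * (1 - y) = 1 - y^2"
  by (simp add: algebra_simps power2_eq_square)

lemma EE_P2: "EE (2*N) * P2 (2*N) = HH N"
proof (induction N)
  case 0 then show ?case by (simp add: HH_def)
next
  case (Suc N)
  have s: "2 * Suc N = Suc (Suc (2*N))" by simp
  have base: "EE (2 * Suc N) * P2 (2 * Suc N) = HH N * ((1 + fps_X^(2*N+2)) * (if (2*N+2) mod 4 = 2 then 1 - fps_X^(2*N+2) else 1))"
    unfolding s EE2 P2_2 Suc.IH[symmetric] by (simp only: mult_ac)
  show ?case
  proof (cases "even N")
    case True
    then obtain m where m: "N = 2*m" by blast
    have md: "(2*N+2) mod 4 = 2" using m by presburger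
    have "HH N * ((1 + fps_X^(2*N+2)) * (1 - fps_X^(2*N+2))) = HH N * (1 - fps_X^(4 * (2*m+1)))"
    proof -
      have ex: "(2*N+2)*2 = 4*(2*m+1)" using m by simp
      have "((fps_X::int fps)^(2*N+2))^2 = fps_X^(4*(2*m+1))" by (simp only: power_mult[symmetric] ex)
      then show ?thesis unfolding sq_diff by simp
    qed
    also have "\<dots> = HH (Suc N)"
    proof -
      have d1: "N div 2 = m" "Suc N div 2 = m" using m by auto
      have "{m+1..Suc (2*m)} = insert (Suc (2*m)) {m+1..2*m}" by auto
      then have "HH (Suc N) = (\<Prod>i\<in>{m+1..2*m}. 1 - fps_X^(4*i)) * (1 - fps_X^(4*(2*m+1)))"
        unfolding HH_def d1 using m by (simp add: mult.commute)
      then show ?thesis unfolding HH_def d1 using m by simp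
    qed
    finally show ?thesis using base md by (simp only: md if_True)
  next
    case False
    then obtain m where m: "N = 2*m+1" by (metis oddE)
    have md: "(2*N+2) mod 4 \<noteq> 2" using m by presburger
    have d1: "N div 2 = m" "Suc N div 2 = m + 1" using m by auto
    have A: "HH N = (1 - fps_X^(4*(m+1))) * (\<Prod>i\<in>{m+2..2*m+1}. 1 - fps_X^(4*i))"
    proof -
      have "{m+1..2*m+1} = insert (m+1) {m+2..2*m+1}" by auto
      then show ?thesis unfolding HH_def d1 m by simp
    qed
    have B: "HH (Suc N) = (\<Prod>i\<in>{m+2..2*m+1}. 1 - fps_X^(4*i)) * (1 - fps_X^(4*(2*m+2)))"
    proof -
      have "{m+2..2*m+2} = insert (2*m+2) {m+2..2*m+1}" by auto
      then show ?thesis unfolding HH_def d1 m by (simp add: mult.commute)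
    qed
    have "HH N * ((1 + fps_X^(2*N+2)) * 1) = HH (Suc N)"
    proof -
      have e: "2*N+2 = 4*(m+1)" using m by simp
      have "HH N * ((1 + fps_X^(2*N+2)) * 1) = (\<Prod>i\<in>{m+2..2*m+1}. 1 - fps_X^(4*i)) * ((1 + fps_X^(4*(m+1))) * (1 - fps_X^(4*(m+1))))"
        unfolding A e by (simp only: mult_ac mult_1_right mult_1_left)
      also have "\<dots> = HH (Suc N)"
      proof -
        have ex: "(4*(m+1))*2 = 4*(2*m+2)" by simp
        have "((fps_X::int fps)^(4*(m+1)))^2 = fps_X^(4*(2*m+2))" by (simp only: power_mult[symmetric] ex)
        then show ?thesis unfolding B sq_diff by simp
      qed
      finally show ?thesis .
    qed
    then show ?thesis using base md by (simp only: md if_False)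
  qed
qed

lemma prod_trunc:
  assumes "finite S" "\<forall>i\<in>S. a \<le> i"
  shows "\<exists>C. (\<Prod>i\<in>S. 1 - (fps_X::int fps)^(4*i)) = 1 + fps_X^(4*a) * C"
  using assms
proof (induction S rule: finite_induct)
  case empty then show ?case by (intro exI[of _ 0]) simp
next
  case (insert i S)
  then obtain C where C: "(\<Prod>i\<in>S. 1 - (fps_X::int fps)^(4*i)) = 1 + fps_X^(4*a) * C" by auto
  have ai: "a \<le> i" using insert by auto
  have px: "(fps_X::int fps)^(4*i) = fps_X^(4*a) * fps_X^(4*i - 4*a)"
    using ai by (simp add: power_add[symmetric])
  have "(\<Prod>i\<in>insert i S. 1 - (fps_X::int fps)^(4*i)) = (1 - fps_X^(4*i)) * (1 + fps_X^(4*a) * C)"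
    using insert C by simp
  also have "\<dots> = 1 + fps_X^(4*a) * (C - fps_X^(4*i - 4*a) * (1 + fps_X^(4*a) * C))"
    unfolding px by (simp add: algebra_simps)
  finally show ?case by blast
qed

lemma HH_trunc: "\<exists>C. HH N = 1 + fps_X^(2*N+2) * C"
proof -
  obtain C where C: "HH N = 1 + fps_X^(4*(N div 2 + 1)) * C"
    using prod_trunc[of "{N div 2 + 1..N}" "N div 2 + 1"] unfolding HH_def by auto
  have "N = 2*(N div 2) + N mod 2" by simp
  moreover have "N mod 2 < 2" by simp
  ultimately have le: "2*N+2 \<le> 4*(N div 2 + 1)" by presburger
  have "(fps_X::int fps)^(4*(N div 2 + 1)) = fps_X^(2*N+2) * fps_X^(4*(N div 2 + 1) - (2*N+2))"
  proof -
    have ex: "2*N+2 + (4*(N div 2 + 1) - (2*N+2)) = 4*(N div 2 + 1)" using le by simp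
    show ?thesis by (simp only: power_add[symmetric] ex)
  qed
  then have "HH N = 1 + fps_X^(2*N+2) * (fps_X^(4*(N div 2 + 1) - (2*N+2)) * C)"
    using C by (simp only: mult.assoc)
  then show ?thesis by blast
qed




lemma step_alg:
  fixes X x T T' D D' :: "'a::idom"
  assumes nz: "1 + x \<noteq> 0"
    and IH: "(1 + X^3) * D = T * (1 - X + x + X * x^2) - 1"
    and d: "D' = D + X^2 * x^2 * T'"
    and t: "T * (1 + x) = T' * (1 - X * x)"
  shows "(1 + X^3) * D' = T' * (1 - X + X^2 * x + X^5 * x^2) - 1"
proof -
  have "T * (1 - X + x + X * x^2) * (1 + x) = T' * (1 - X + X^2 * x - X^2 * x^2) * (1 + x)"
    using t by algebra
  then have e: "T * (1 - X + x + X * x^2) = T' * (1 - X + X^2 * x - X^2 * x^2)"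
    using nz by simp
  show ?thesis using IH d e by algebra
qed

lemma base_alg:
  fixes X T1 D1 :: "'a::idom"
  assumes "T1 * (1 - X) = 1" "D1 = X^2 * T1"
  shows "(1 + X^3) * D1 = T1 * (1 - X + X^2 + X^5) - 1"
  using assms by algebra

lemma pw2: "a = b + c * 2 \<Longrightarrow> (y::'a::monoid_mult)^a = y^b * (y^c)^2"
  by (simp add: power_add power_mult)
lemma pw1: "a = b + c \<Longrightarrow> (y::'a::monoid_mult)^a = y^b * y^c"
  by (simp add: power_add)

lemma tele: "(1 + fps_X^3) * DD (2*N+1) = T (2*N+1) * (1 - fps_X + fps_X^(2*N+2) + fps_X^(4*N+5)) - 1"
proof (induction N)
  case 0
  have t1: "T 1 * (1 - fps_X) = 1"
    using TT_Suc_noB[of "\<lambda>_. True" 0 even] by (simp add: TT_0)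
  have d1: "DD 1 = fps_X^2 * T 1"
    using DD_Suc[of 0] by (simp add: DD_0)
  show ?case unfolding mult_0_right add_0 by (rule base_alg[OF t1 d1])
next
  case (Suc N)
  define x :: "int fps" where "x = fps_X^(2*N+2)"
  have nz: "1 + x \<noteq> 0"
  proof
    assume "1 + x = 0"
    then have "(1 + x) $ 0 = 0" by simp
    then show False unfolding x_def by simp
  qed
  have IH: "(1 + fps_X^3) * DD (2*N+1) = T (2*N+1) * (1 - fps_X + x + fps_X * x^2) - 1"
  proof -
    have e: "(fps_X::int fps)^(4*N+5) = fps_X^1 * (fps_X^(2*N+2))^2" by (rule pw2) simp
    show ?thesis using Suc.IH unfolding x_def e power_one_right .
  qed
  have s1: "2 * Suc N + 1 = Suc (Suc (2*N+1))" by simp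
  have dd2: "DD (Suc (2*N+1)) = DD (2*N+1)"
    using DD_Suc[of "2*N+1"] by simp
  have dd3: "DD (Suc (Suc (2*N+1))) = DD (2*N+1) + fps_X^2 * x^2 * T (Suc (Suc (2*N+1)))"
  proof -
    have "DD (Suc (Suc (2*N+1))) = DD (Suc (2*N+1)) + fps_X^(2 * Suc (Suc (2*N+1))) * T (Suc (Suc (2*N+1)))"
      by (subst DD_Suc) simp
    moreover have "(fps_X::int fps)^(2 * Suc (Suc (2*N+1))) = fps_X^2 * x^2"
      unfolding x_def by (rule pw2) simp
    ultimately show ?thesis using dd2 by simp
  qed
  have t2: "T (Suc (2*N+1)) = T (2*N+1) * (1 + x)"
    using TT_Suc_B[of "\<lambda>_. True" "2*N+1" even] unfolding x_def by simp
  have t3: "T (Suc (Suc (2*N+1))) * (1 - fps_X * x) = T (Suc (2*N+1))"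
  proof -
    have ee: "Suc (Suc (2*N+1)) = Suc (2*N+2)" by simp
    have "(fps_X::int fps)^(Suc (Suc (2*N+1))) = fps_X * x" unfolding x_def ee by (rule power_Suc)
    then show ?thesis using TT_Suc_noB[of "\<lambda>_. True" "Suc (2*N+1)" even] by simp
  qed
  have t: "T (2*N+1) * (1 + x) = T (Suc (Suc (2*N+1))) * (1 - fps_X * x)"
    using t2 t3 by simp
  have goal: "(1 + fps_X^3) * DD (Suc (Suc (2*N+1))) = T (Suc (Suc (2*N+1))) * (1 - fps_X + fps_X^2 * x + fps_X^5 * x^2) - 1"
    by (rule step_alg[OF nz IH dd3 t])
  have e1: "(fps_X::int fps)^(2 * Suc N + 2) = fps_X^2 * x" unfolding x_def by (rule pw1) simp
  have e2: "(fps_X::int fps)^(4 * Suc N + 5) = fps_X^5 * x^2" unfolding x_def by (rule pw2) simp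
  show ?case unfolding s1 e1 e2 by (rule goal)
qed




lemma Dset_DE2:
  assumes "m \<le> k"
  shows "DE2 (int m) = card (Dset k m)"
proof -
  have "{M \<in> partitions m.
             (\<forall>x\<in>#M. even x \<longrightarrow> count M x \<le> 1) \<and>
             M \<noteq> {#} \<and> odd (Max (set_mset M)) \<and> 2 \<le> count M (Max (set_mset M))} = Dset k m"
    unfolding Dset_def Sg_def partitions_def using assms mem_le_sum by (auto intro: le_trans)
  then show ?thesis unfolding DE2_def by simp
qed

lemma Q_card:
  assumes "m \<le> k"
  shows "card (Sg (\<lambda>x. 1 < x \<and> \<not> 4 dvd x) (\<lambda>_. False) k m) =
         card {M \<in> partitions m. \<forall>x\<in>#M. 1 < x \<and> \<not> 4 dvd x}"
proof -
  have "Sg (\<lambda>x. 1 < x \<and> \<not> 4 dvd x) (\<lambda>_. False) k m = {M \<in> partitions m. \<forall>x\<in>#M. 1 < x \<and> \<not> 4 dvd x}"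
    unfolding Sg_def partitions_def using assms mem_le_sum by (auto intro: le_trans)
  then show ?thesis by simp
qed

lemma glaisher:
  assumes "k = 2*m+1"
  shows "\<exists>C. T k * (1 - fps_X) = Q k + fps_X^(2*m+2) * C"
proof -
  obtain C where C: "HH m = 1 + fps_X^(2*m+2) * C" using HH_trunc by blast
  have ee: "EE k = EE (2*m)" using assms by simp
  have pp: "P2 k = P2 (2*m)"
  proof -
    have "Suc (2*m) mod 4 \<noteq> 2" by presburger
    then show ?thesis using assms by simp
  qed
  have po: "PO k = (1 - fps_X) * PO3 k" using PO_split[of k] assms by simp
  have "T k * (1 - fps_X) * PA k = T k * PO k * P2 k"
    unfolding PA_split po by (simp only: mult_ac)
  also have "\<dots> = EE (2*m) * P2 (2*m)" unfolding T_PO ee pp ..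
  also have "\<dots> = 1 + fps_X^(2*m+2) * C" unfolding EE_P2 C ..
  finally have a: "T k * (1 - fps_X) * PA k = 1 + fps_X^(2*m+2) * C" .
  have "T k * (1 - fps_X) = T k * (1 - fps_X) * (Q k * PA k)" by (simp only: Q_PA mult_1_right)
  also have "\<dots> = Q k * (T k * (1 - fps_X) * PA k)" by (simp only: mult_ac)
  also have "\<dots> = Q k + fps_X^(2*m+2) * (C * Q k)" unfolding a by (simp add: algebra_simps)
  finally show ?thesis by blast
qed

theorem corollary2:
  fixes n :: int
  assumes "n > 0"
  shows "DE2 n + DE2 (n - 3) =
         card {M \<in> partitions (nat n). \<forall>x\<in>#M. 1 < x \<and> \<not> 4 dvd x}"
proof -
  define m where "m = nat n"
  have nm: "n = int m" and m1: "m \<ge> 1" using assms unfolding m_def by auto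
  define k where "k = 2*m+1"
  have mk: "m \<le> k" unfolding k_def by simp
  obtain C where C: "T k * (1 - fps_X) = Q k + fps_X^(2*m+2) * C"
    using glaisher[OF k_def] by blast
  have main: "(1 + fps_X^3) * DD k = T k * (1 - fps_X + fps_X^(2*m+2) + fps_X^(4*m+5)) - 1"
    unfolding k_def by (rule tele)
  have lhs: "((1 + fps_X^3) * DD k) $ m = int (DE2 n + DE2 (n - 3))"
  proof -
    have "((1 + fps_X^3) * DD k) $ m = DD k $ m + (fps_X^3 * DD k) $ m"
      by (simp add: distrib_right)
    also have "\<dots> = int (card (Dset k m)) + (if m < 3 then 0 else int (card (Dset k (m - 3))))"
      by (simp add: fps_X_power_mult_nth del: power_Suc)
    also have "\<dots> = int (DE2 n + DE2 (n - 3))"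
    proof (cases "m < 3")
      case True
      then have "n - 3 < 0" using nm by simp
      then have "DE2 (n - 3) = 0" unfolding DE2_def by simp
      then show ?thesis using True Dset_DE2[OF mk] nm by simp
    next
      case False
      then have "n - 3 = int (m - 3)" using nm by simp
      then show ?thesis using False Dset_DE2[OF mk] Dset_DE2[of "m - 3" k] mk nm by simp
    qed
    finally show ?thesis .
  qed
  have rhs: "(T k * (1 - fps_X + fps_X^(2*m+2) + fps_X^(4*m+5)) - 1) $ m
      = int (card {M \<in> partitions (nat n). \<forall>x\<in>#M. 1 < x \<and> \<not> 4 dvd x})"
  proof -
    have "T k * (1 - fps_X + fps_X^(2*m+2) + fps_X^(4*m+5)) - 1
        = Q k + fps_X^(2*m+2) * C + T k * fps_X^(2*m+2) + T k * fps_X^(4*m+5) - 1"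
      unfolding C[symmetric] by (simp add: algebra_simps)
    then have "(T k * (1 - fps_X + fps_X^(2*m+2) + fps_X^(4*m+5)) - 1) $ m = Q k $ m"
      using m1 by (simp add: fps_X_power_mult_nth fps_X_power_mult_right_nth del: power_Suc)
    also have "\<dots> = int (card {M \<in> partitions (nat n). \<forall>x\<in>#M. 1 < x \<and> \<not> 4 dvd x})"
      using Q_card[OF mk] unfolding m_def by simp
    finally show ?thesis .
  qed
  show ?thesis using lhs rhs main by simp
qed



end
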